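(* Let $B\subseteq A$ be commutative unital $\mathbb{R}$-algebras with $A=B[f]$ for some $f\in A$, let $Q\subseteq B$ be an archimedean quadratic module of $B$, and let $Q'\subseteq A$ be a quadratic module of $A$ with $Q\subseteq Q'\cap B$. If either $f$ is integral over $B$, or $N-f^2\in Q'$ for some $N\in\mathbb{N}$, then $Q'$ is archimedean in $A$.
   Context: A quadratic module of a commutative unital $\mathbb{R}$-algebra $C$ is a subset $Q\subseteq C$ with $Q+Q\subseteq Q$, $c^2Q\subseteq Q$ for all $c\in C$, and $1\in Q$. It is archimedean in $C$ if for every $c\in C$ there is an integer $n\ge1$ with $n+c\in Q$. *)

theory Defs
  imports Main "HOL.Real_Vector_Spaces"
begin

text \<open>Commutative unital real algebras are modelled as types of class
  comm_ring_1 and real_algebra_1; subalgebras as subsets.\<close>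

definition subalgebra :: "'a::{comm_ring_1,real_algebra_1} set \<Rightarrow> bool" where
  "subalgebra B \<longleftrightarrow> 1 \<in> B \<and> (\<forall>x\<in>B. \<forall>y\<in>B. x + y \<in> B \<and> x * y \<in> B)
     \<and> (\<forall>r::real. \<forall>x\<in>B. r *\<^sub>R x \<in> B)"

definition adjoin :: "'a::{comm_ring_1,real_algebra_1} set \<Rightarrow> 'a \<Rightarrow> 'a set" where
  "adjoin B f = {a. \<exists>n c. (\<forall>i. c i \<in> B) \<and> a = (\<Sum>i\<le>n. c i * f ^ i)}"

definition integral_over :: "'a::comm_ring_1 set \<Rightarrow> 'a \<Rightarrow> bool" where
  "integral_over B f \<longleftrightarrow> (\<exists>n c. (\<forall>i<n. c i \<in> B) \<and> f ^ n + (\<Sum>i<n. c i * f ^ i) = 0)"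

definition quadratic_module :: "'a::comm_ring_1 set \<Rightarrow> 'a set \<Rightarrow> bool" where
  "quadratic_module C Q \<longleftrightarrow> Q \<subseteq> C \<and> (\<forall>x\<in>Q. \<forall>y\<in>Q. x + y \<in> Q)
     \<and> (\<forall>c\<in>C. \<forall>q\<in>Q. c\<^sup>2 * q \<in> Q) \<and> 1 \<in> Q"

definition archimedean_in :: "'a::comm_ring_1 set \<Rightarrow> 'a set \<Rightarrow> bool" where
  "archimedean_in C Q \<longleftrightarrow> (\<forall>c\<in>C. \<exists>n::nat. n \<ge> 1 \<and> of_nat n + c \<in> Q)"

end

theory Submission
  imports Defs Complex_Main
begin

locale qmod =
  fixes M :: "'a::{comm_ring_1,real_algebra_1} set"
  assumes qm: "quadratic_module UNIV M"
begin

lemma M_add: "x \<in> M \<Longrightarrow> y \<in> M \<Longrightarrow> x + y \<in> M"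
  using qm unfolding quadratic_module_def by blast
lemma M_sqmult: "q \<in> M \<Longrightarrow> c\<^sup>2 * q \<in> M"
  using qm unfolding quadratic_module_def by blast
lemma M_one: "1 \<in> M"
  using qm unfolding quadratic_module_def by blast
lemma M_sq: "c\<^sup>2 \<in> M"
  using M_sqmult[OF M_one, of c] by simp
lemma M_zero: "0 \<in> M"
  using M_sq[of 0] by simp
lemma M_scale: assumes "r \<ge> 0" "q \<in> M" shows "of_real r * q \<in> M"
proof -
  have "(of_real (sqrt r) :: 'a)\<^sup>2 = of_real r"
    by (metis assms(1) of_real_power real_sqrt_pow2)
  then show ?thesis using M_sqmult[OF assms(2), of "of_real (sqrt r)"] by simp
qed
lemma M_real: "r \<ge> 0 \<Longrightarrow> of_real r \<in> M"
  using M_scale[OF _ M_one] by simp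
lemma M_sum: "finite I \<Longrightarrow> (\<And>i. i \<in> I \<Longrightarrow> g i \<in> M) \<Longrightarrow> sum g I \<in> M"
  by (induction I rule: finite_induct) (auto intro: M_add M_zero)

definition lq :: "'a \<Rightarrow> 'a \<Rightarrow> bool" where "lq x y \<longleftrightarrow> y - x \<in> M"

lemma lq_refl: "lq x x" by (simp add: lq_def M_zero)
lemma lq_trans: "lq x y \<Longrightarrow> lq y z \<Longrightarrow> lq x z"
  unfolding lq_def using M_add by fastforce
lemma lq_add: "lq a b \<Longrightarrow> lq c d \<Longrightarrow> lq (a + c) (b + d)"
  unfolding lq_def using M_add by (fastforce simp: algebra_simps)
lemma lq_scale: "r \<ge> 0 \<Longrightarrow> lq a b \<Longrightarrow> lq (of_real r * a) (of_real r * b)"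
  unfolding lq_def using M_scale by (fastforce simp: algebra_simps)
lemma lq_sqmult: "lq a b \<Longrightarrow> lq (c\<^sup>2 * a) (c\<^sup>2 * b)"
  unfolding lq_def using M_sqmult by (fastforce simp: algebra_simps)
lemma lq_nonneg: "x \<in> M \<Longrightarrow> lq a (a + x)"
  unfolding lq_def by simp

definition ub :: "'a \<Rightarrow> bool" where "ub a \<longleftrightarrow> (\<exists>r. lq a (of_real r))"
definition H :: "'a set" where "H = {a. ub a \<and> ub (- a)}"

lemma ub_le: "lq a b \<Longrightarrow> ub b \<Longrightarrow> ub a"
  unfolding ub_def using lq_trans by blast
lemma ub_add: "ub a \<Longrightarrow> ub b \<Longrightarrow> ub (a + b)"
  unfolding ub_def using lq_add by (metis of_real_add)
lemma ub_real: "ub (of_real r)"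
  unfolding ub_def using lq_refl by blast
lemma ub_pos: assumes "ub a" shows "\<exists>r>0. lq a (of_real r)"
proof -
  obtain r where r: "lq a (of_real r)" using assms ub_def by blast
  have "lq (of_real r) (of_real (\<bar>r\<bar> + 1))"
    unfolding lq_def by (rule M_real[of "\<bar>r\<bar> + 1 - r", simplified of_real_diff]) (simp add: of_real_diff) 
  then show ?thesis using r lq_trans by (metis abs_ge_zero add_pos_nonneg zero_less_one add.commute)
qed
lemma ub_scale: "r \<ge> 0 \<Longrightarrow> ub a \<Longrightarrow> ub (of_real r * a)"
  unfolding ub_def using lq_scale by (metis of_real_mult)

lemma H_add: assumes "a \<in> H" "b \<in> H" shows "a + b \<in> H"
proof -
  have "ub (a + b)" using assms ub_add unfolding H_def by blast
  moreover have "ub (- a + - b)" using assms ub_add unfolding H_def by blast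
  ultimately show ?thesis unfolding H_def by simp
qed
lemma H_uminus: "a \<in> H \<Longrightarrow> - a \<in> H"
  unfolding H_def by auto
lemma H_real: "of_real r \<in> H"
proof -
  have "ub (of_real r)" "ub (of_real (- r))" by (rule ub_real)+
  then show ?thesis unfolding H_def by simp
qed
lemma H_scale_pos: assumes "a \<in> H" "r \<ge> 0" shows "of_real r * a \<in> H"
proof -
  have "ub (of_real r * a)" "ub (of_real r * (- a))" using assms ub_scale unfolding H_def by blast+
  then show ?thesis unfolding H_def by simp
qed
lemma H_scale: assumes "a \<in> H" shows "of_real r * a \<in> H"
proof (cases "r \<ge> 0")
  case True
  then show ?thesis using assms H_scale_pos by blast
next
  case False
  then have "of_real (- r) * (- a) \<in> H" using assms H_scale_pos[of "- a" "- r"] H_uminus by simp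
  then show ?thesis by simp
qed

lemma sq_ub: assumes "a \<in> H" shows "\<exists>r\<ge>0. lq (a\<^sup>2) (of_real r)"
proof -
  obtain r1 where r1: "r1 > 0" "lq a (of_real r1)" using assms ub_pos H_def by blast
  obtain r2 where r2: "r2 > 0" "lq (-a) (of_real r2)" using assms ub_pos H_def by blast
  define r where "r = r1 + r2"
  have "lq (of_real r1) (of_real r)" unfolding lq_def r_def using M_real[of r2] r2 by simp
  with r1 have p: "of_real r - a \<in> M" using lq_trans lq_def by blast
  have "lq (of_real r2) (of_real r)" unfolding lq_def r_def using M_real[of r1] r1 by simp
  with r2 have m: "of_real r + a \<in> M" using lq_trans lq_def by fastforce
  have rpos: "r > 0" using r1 r2 r_def by simp
  define R :: 'a where "R = of_real r"
  have X: "(R + a)\<^sup>2 * (R - a) + (R - a)\<^sup>2 * (R + a) \<in> M"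
    using p m M_add M_sqmult R_def by blast
  have "of_real (1 / (2 * r)) * ((R + a)\<^sup>2 * (R - a) + (R - a)\<^sup>2 * (R + a))
        = of_real (1 / (2 * r)) * of_real (2 * r) * (R\<^sup>2 - a\<^sup>2)"
    by (simp add: R_def algebra_simps power2_eq_square)
  also have "\<dots> = R\<^sup>2 - a\<^sup>2" using rpos by (simp flip: of_real_mult)
  finally have "R\<^sup>2 - a\<^sup>2 \<in> M" using M_scale[OF _ X, of "1/(2*r)"] rpos by simp
  then show ?thesis unfolding lq_def R_def by (intro exI[of _ "r\<^sup>2"]) auto
qed

lemma ubsq_H: assumes "ub (a\<^sup>2)" shows "a \<in> H"
proof -
  obtain r where r: "lq (a\<^sup>2) (of_real r)" using assms ub_def by blast
  have e1: "(1 + a)\<^sup>2 + (of_real r - a\<^sup>2) = of_real (1 + r) - (- (of_real 2 * a))"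
    by (simp add: algebra_simps power2_eq_square)
  have e2: "(1 - a)\<^sup>2 + (of_real r - a\<^sup>2) = of_real (1 + r) - (of_real 2 * a)"
    by (simp add: algebra_simps power2_eq_square)
  have "lq (- (of_real 2 * a)) (of_real (1 + r))" "lq (of_real 2 * a) (of_real (1 + r))"
    unfolding lq_def using M_add[OF M_sq r[unfolded lq_def]] e1 e2 by metis+
  then have "ub (- (of_real 2 * a))" "ub (of_real 2 * a)" unfolding ub_def by blast+
  note u = this
  have "ub (of_real (1/2) * (- (of_real 2 * a)))" by (rule ub_scale[OF _ u(1)]) simp
  moreover have "ub (of_real (1/2) * (of_real 2 * a))" by (rule ub_scale[OF _ u(2)]) simp
  moreover have "of_real (1/2) * (of_real 2 * x) = (x::'a)" for x
    by (simp only: mult.assoc[symmetric] of_real_mult[symmetric]) simp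
  ultimately show ?thesis unfolding H_def by (metis mult_minus_right mem_Collect_eq)
qed

lemma H_mult: assumes "a \<in> H" "b \<in> H" shows "a * b \<in> H"
proof -
  have "a + b \<in> H" "a + - b \<in> H" using assms H_add H_uminus by blast+
  then obtain r1 r2 where r: "lq ((a + b)\<^sup>2) (of_real r1)" "lq ((a + - b)\<^sup>2) (of_real r2)"
    using sq_ub by meson
  have e1: "(a + b)\<^sup>2 - of_real 4 * (a * b) = (a + - b)\<^sup>2"
    by (simp add: algebra_simps power2_eq_square)
  have "lq (of_real 4 * (a * b)) ((a + b)\<^sup>2)"
    unfolding lq_def e1 by (rule M_sq)
  then have u1: "ub (of_real 4 * (a * b))" using r(1) ub_le ub_def by blast
  have e2: "(a + - b)\<^sup>2 - of_real 4 * (- (a * b)) = (a + b)\<^sup>2"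
    by (simp add: algebra_simps power2_eq_square)
  have "lq (of_real 4 * (- (a * b))) ((a + - b)\<^sup>2)"
    unfolding lq_def e2 by (rule M_sq)
  then have u2: "ub (of_real 4 * (- (a * b)))" using r(2) ub_le ub_def by blast
  have "ub (of_real (1/4) * (of_real 4 * (a * b)))" by (rule ub_scale[OF _ u1]) simp
  moreover have "ub (of_real (1/4) * (of_real 4 * (- (a * b))))" by (rule ub_scale[OF _ u2]) simp
  moreover have "of_real (1/4) * (of_real 4 * x) = (x::'a)" for x
    by (simp only: mult.assoc[symmetric] of_real_mult[symmetric]) simp
  ultimately show ?thesis unfolding H_def by (metis mem_Collect_eq)
qed

lemma H_one: "1 \<in> H" using H_real[of 1] by simp
lemma H_zero: "0 \<in> H" using H_real[of 0] by simp
lemma H_pow: "a \<in> H \<Longrightarrow> a ^ n \<in> H"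
  by (induction n) (auto intro: H_mult H_one)
lemma H_sum: "finite I \<Longrightarrow> (\<And>i. i \<in> I \<Longrightarrow> g i \<in> H) \<Longrightarrow> sum g I \<in> H"
  by (induction I rule: finite_induct) (auto intro: H_add H_zero)


lemma lq_sum: "finite I \<Longrightarrow> (\<And>i. i \<in> I \<Longrightarrow> \<exists>K\<ge>0. lq (g i) (of_real K * s))
   \<Longrightarrow> \<exists>K\<ge>0. lq (sum g I) (of_real K * s)"
proof (induction I rule: finite_induct)
  case empty
  show ?case by (intro exI[of _ 0]) (simp add: lq_refl)
next
  case (insert x F)
  obtain K1 where K1: "K1 \<ge> 0" "lq (g x) (of_real K1 * s)" using insert by blast
  obtain K2 where K2: "K2 \<ge> 0" "lq (sum g F) (of_real K2 * s)" using insert by blast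
  have "lq (g x + sum g F) (of_real K1 * s + of_real K2 * s)" using K1 K2 lq_add by blast
  moreover have "of_real K1 * s + of_real K2 * s = of_real (K1 + K2) * s" by (simp add: algebra_simps)
  ultimately show ?case using insert K1 K2 by (intro exI[of _ "K1 + K2"]) simp
qed

lemma sq_sum_bound: "lq ((x + y)\<^sup>2) (of_real 2 * x\<^sup>2 + of_real 2 * y\<^sup>2)"
proof -
  have "of_real 2 * x\<^sup>2 + of_real 2 * y\<^sup>2 - (x + y)\<^sup>2 = (x - y)\<^sup>2"
    by (simp add: algebra_simps power2_eq_square)
  then show ?thesis unfolding lq_def using M_sq by metis
qed

lemma integral_H:
  fixes f :: 'a
  assumes cH: "\<forall>i<n. c i \<in> H" and eq: "f ^ n + (\<Sum>i<n. c i * f ^ i) = 0"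
  shows "f \<in> H"
proof -
  define s where "s = (\<Sum>i<n. (f ^ i)\<^sup>2)"
  define V where "V = {g. \<exists>d. (\<forall>i<n. d i \<in> H) \<and> g = (\<Sum>i<n. d i * f ^ i)}"
  have fn: "f ^ n = - (\<Sum>i<n. c i * f ^ i)" using eq by (simp add: eq_neg_iff_add_eq_0)
  have s_ge: "lq ((f ^ i)\<^sup>2) s" if "i < n" for i
  proof -
    have "s = (f ^ i)\<^sup>2 + (\<Sum>j\<in>{..<n} - {i}. (f ^ j)\<^sup>2)"
      unfolding s_def using that sum.remove[of "{..<n}" i "\<lambda>j. (f ^ j)\<^sup>2"] by simp
    moreover have "(\<Sum>j\<in>{..<n} - {i}. (f ^ j)\<^sup>2) \<in> M" by (intro M_sum M_sq) simp
    ultimately show ?thesis unfolding lq_def by simp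
  qed
  have V1: "1 \<in> V"
  proof (cases n)
    case 0
    then have z: "(1::'a) = 0" using eq by simp
    have "(\<forall>i<n. (\<lambda>_. 0) i \<in> H) \<and> (1::'a) = (\<Sum>i<n. (\<lambda>_. 0) i * f ^ i)"
      using 0 z by simp
    then show ?thesis unfolding V_def mem_Collect_eq by (rule exI[of _ "\<lambda>_. 0"])
  next
    case (Suc k)
    let ?d = "\<lambda>i. if i = 0 then (1::'a) else 0"
    have "(\<Sum>i<n. ?d i * f ^ i) = 1" unfolding Suc by (subst sum.lessThan_Suc_shift) simp
    moreover have "\<forall>i<n. ?d i \<in> H" using H_one H_zero by simp
    ultimately have "(\<forall>i<n. ?d i \<in> H) \<and> 1 = (\<Sum>i<n. ?d i * f ^ i)" by simp
    then show ?thesis unfolding V_def mem_Collect_eq by (rule exI[of _ ?d])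
  qed
  have Vf: "f * g \<in> V" if gV: "g \<in> V" for g
  proof (cases n)
    case 0
    then show ?thesis using gV unfolding V_def by simp
  next
    case (Suc k)
    obtain d where d: "\<forall>i<n. d i \<in> H" "g = (\<Sum>i<n. d i * f ^ i)" using gV unfolding V_def by blast
    define e where "e i = (if i = 0 then 0 else d (i - 1)) - d k * c i" for i
    have "f * g = (\<Sum>i<k. d i * f ^ Suc i) + d k * f ^ n"
      unfolding d(2) Suc by (simp add: sum_distrib_left algebra_simps)
    also have "\<dots> = (\<Sum>i<n. (if i = 0 then 0 else d (i - 1)) * f ^ i) - d k * (\<Sum>i<n. c i * f ^ i)"
    proof -
      have "(\<Sum>i<Suc k. (if i = 0 then 0 else d (i - 1)) * f ^ i) = (\<Sum>i<k. d i * f ^ Suc i)"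
        by (subst sum.lessThan_Suc_shift) simp
      moreover have "d k * f ^ n = - (d k * (\<Sum>i<n. c i * f ^ i))" by (simp add: fn)
      ultimately show ?thesis unfolding Suc by (simp only:) simp
    qed
    also have "\<dots> = (\<Sum>i<n. e i * f ^ i)"
      unfolding e_def by (simp add: algebra_simps sum_subtractf sum_distrib_left)
    finally have "f * g = (\<Sum>i<n. e i * f ^ i)" .
    moreover have "\<forall>i<n. e i \<in> H"
    proof (intro allI impI)
      fix i assume "i < n"
      have h1: "(if i = 0 then 0 else d (i - 1)) \<in> H"
      proof (cases "i = 0")
        case True then show ?thesis using H_zero by simp
      next
        case False then have "i - 1 < n" using \<open>i < n\<close> by simp
        then show ?thesis using False d(1) by simp
      qed
      have h2: "d k * c i \<in> H" by (rule H_mult) (use d(1) cH \<open>i < n\<close> Suc in auto)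
      show "e i \<in> H" unfolding e_def diff_conv_add_uminus by (intro H_add H_uminus h1 h2)
    qed
    ultimately show ?thesis unfolding V_def mem_Collect_eq by (intro exI[of _ e]) simp
  qed
  have Vpow: "f ^ m \<in> V" for m
    by (induction m) (use V1 Vf in auto)
  have Vbound: "\<exists>K\<ge>0. lq (g\<^sup>2) (of_real K * s)" if gV: "g \<in> V" for g
  proof -
    obtain d where d: "\<forall>i<n. d i \<in> H" "g = (\<Sum>i<n. d i * f ^ i)" using gV unfolding V_def by blast
    have "I \<subseteq> {..<n} \<Longrightarrow> \<exists>K\<ge>0. lq ((\<Sum>i\<in>I. d i * f ^ i)\<^sup>2) (of_real K * s)" for I
    proof (induction I rule: infinite_finite_induct)
      case (infinite A)
      then show ?case using finite_subset by blast
    next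
      case empty
      show ?case by (intro exI[of _ 0]) (simp add: lq_refl)
    next
      case (insert x F)
      obtain K where K: "K \<ge> 0" "lq ((\<Sum>i\<in>F. d i * f ^ i)\<^sup>2) (of_real K * s)" using insert by auto
      have xn: "x < n" using insert by auto
      obtain R where R: "R \<ge> 0" "lq ((d x)\<^sup>2) (of_real R)" using sq_ub d(1) xn by blast
      have "lq ((f ^ x)\<^sup>2 * (d x)\<^sup>2) ((f ^ x)\<^sup>2 * of_real R)" using lq_sqmult[OF R(2)] by simp
      moreover have "lq (of_real R * (f ^ x)\<^sup>2) (of_real R * s)" using lq_scale[OF R(1) s_ge[OF xn]] .
      ultimately have t: "lq ((d x * f ^ x)\<^sup>2) (of_real R * s)"
        using lq_trans by (simp add: power_mult_distrib mult.commute)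
      have "lq ((d x * f ^ x + (\<Sum>i\<in>F. d i * f ^ i))\<^sup>2)
               (of_real 2 * (d x * f ^ x)\<^sup>2 + of_real 2 * (\<Sum>i\<in>F. d i * f ^ i)\<^sup>2)"
        by (rule sq_sum_bound)
      moreover have "lq (of_real 2 * (d x * f ^ x)\<^sup>2 + of_real 2 * (\<Sum>i\<in>F. d i * f ^ i)\<^sup>2)
               (of_real 2 * (of_real R * s) + of_real 2 * (of_real K * s))"
      proof (rule lq_add)
        show "lq (of_real 2 * (d x * f ^ x)\<^sup>2) (of_real 2 * (of_real R * s))" by (rule lq_scale[OF _ t]) simp
        show "lq (of_real 2 * (\<Sum>i\<in>F. d i * f ^ i)\<^sup>2) (of_real 2 * (of_real K * s))" by (rule lq_scale[OF _ K(2)]) simp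
      qed
      ultimately have l: "lq ((d x * f ^ x + (\<Sum>i\<in>F. d i * f ^ i))\<^sup>2) (of_real 2 * (of_real R * s) + of_real 2 * (of_real K * s))"
        by (rule lq_trans)
      have "of_real 2 * (of_real R * s) + of_real 2 * (of_real K * s) = of_real (2 * R + 2 * K) * s"
        by (simp add: algebra_simps)
      with l have "lq ((d x * f ^ x + (\<Sum>i\<in>F. d i * f ^ i))\<^sup>2) (of_real (2 * R + 2 * K) * s)"
        by simp
      then show ?case using insert R K by (intro exI[of _ "2 * R + 2 * K"]) simp
    qed
    then show ?thesis using d(2) by blast
  qed
  have "s * s = (\<Sum>i<n. \<Sum>j<n. (f ^ (i + j))\<^sup>2)"
    unfolding s_def by (simp add: sum_product power_add power_mult_distrib)
  moreover have "\<exists>K\<ge>0. lq (\<Sum>i<n. \<Sum>j<n. (f ^ (i + j))\<^sup>2) (of_real K * s)"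
    by (intro lq_sum) (use Vbound Vpow in auto)
  ultimately obtain K where K: "K \<ge> 0" "lq (s * s) (of_real K * s)" by auto
  define h :: 'a where "h = of_real (K / 2)"
  have hK: "of_real K = 2 * h" unfolding h_def by (metis of_real_numeral of_real_mult field_sum_of_halves mult_2)
  have hK2: "of_real (K\<^sup>2 / 4) = h\<^sup>2" unfolding h_def by (simp add: power_divide flip: of_real_power)
  have "of_real K * s - s * s = of_real (K\<^sup>2 / 4) - (s - of_real (K / 2))\<^sup>2"
    unfolding hK hK2 h_def[symmetric] by (simp add: algebra_simps power2_eq_square)
  then have "lq ((s - of_real (K / 2))\<^sup>2) (of_real (K\<^sup>2 / 4))" using K(2) unfolding lq_def by simp
  then have "s - of_real (K / 2) \<in> H" using ubsq_H ub_def by blast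
  then have "ub (s - of_real (K / 2) + of_real (K / 2))" using H_def ub_add ub_real by blast
  then obtain S where S: "lq s (of_real S)" using ub_def by auto
  obtain K' where K': "K' \<ge> 0" "lq (f\<^sup>2) (of_real K' * s)" using Vbound[OF Vpow[of 1]] by auto
  have "lq (f\<^sup>2) (of_real (K' * S))" using lq_trans[OF K'(2) lq_scale[OF K'(1) S]] by simp
  then show ?thesis using ubsq_H ub_def by blast
qed

lemma arch: assumes "\<And>c. c \<in> H" shows "archimedean_in UNIV M"
  unfolding archimedean_in_def
proof
  fix c :: 'a
  obtain r where r: "lq (- c) (of_real r)" using assms[of c] H_def ub_def by blast
  define n where "n = nat \<lceil>r\<rceil> + 1"
  have "real n \<ge> r" unfolding n_def by linarith
  then have "of_real (real n - r) \<in> M" by (intro M_real) simp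
  moreover have "of_real r + c \<in> M" using r unfolding lq_def by simp
  ultimately have "of_real (real n - r) + (of_real r + c) \<in> M" by (rule M_add)
  then have "of_nat n + c \<in> M" by (simp add: of_real_diff)
  moreover have "n \<ge> 1" unfolding n_def by simp
  ultimately show "\<exists>n::nat. n \<ge> 1 \<and> of_nat n + c \<in> M" by blast
qed

end

theorem proposition3p6:
  fixes B :: "'a::{comm_ring_1,real_algebra_1} set"
    and f :: 'a
    and Q Q' :: "'a set"
  assumes "subalgebra B"
    and "adjoin B f = UNIV"
    and "quadratic_module B Q" and "archimedean_in B Q"
    and "quadratic_module UNIV Q'"
    and "Q \<subseteq> Q' \<inter> B"
    and "integral_over B f \<or> (\<exists>N::nat. of_nat N - f\<^sup>2 \<in> Q')"
  shows "archimedean_in UNIV Q'"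
proof -
  interpret qmod Q' by unfold_locales (rule assms(5))
  have BH: "b \<in> H" if bB: "b \<in> B" for b
  proof -
    have "(-1::real) *\<^sub>R b \<in> B" using assms(1) bB unfolding subalgebra_def by blast
    then have mb: "- b \<in> B" by simp
    obtain n1 :: nat where n1: "of_nat n1 + b \<in> Q" using assms(4) bB unfolding archimedean_in_def by blast
    obtain n2 :: nat where n2: "of_nat n2 + - b \<in> Q" using assms(4) mb unfolding archimedean_in_def by blast
    have "lq (- b) (of_real (real n1))" unfolding lq_def using n1 assms(6) by auto
    moreover have "lq b (of_real (real n2))" unfolding lq_def using n2 assms(6) by auto
    ultimately show ?thesis unfolding H_def ub_def by blast
  qed
  have fH: "f \<in> H"
    using assms(7)
  proof
    assume "integral_over B f"
    then obtain n c where c: "\<forall>i<n. c i \<in> B" "f ^ n + (\<Sum>i<n. c i * f ^ i) = 0"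
      unfolding integral_over_def by blast
    show "f \<in> H" by (rule integral_H[of n c]) (use c BH in auto)
  next
    assume "\<exists>N::nat. of_nat N - f\<^sup>2 \<in> Q'"
    then obtain N :: nat where "of_nat N - f\<^sup>2 \<in> Q'" by blast
    then have "lq (f\<^sup>2) (of_real (real N))" unfolding lq_def by simp
    then show "f \<in> H" using ubsq_H ub_def by blast
  qed
  have "a \<in> H" for a
  proof -
    have "a \<in> adjoin B f" using assms(2) by simp
    then obtain n c where c: "\<forall>i. c i \<in> B" "a = (\<Sum>i\<le>n. c i * f ^ i)" unfolding adjoin_def by blast
    show ?thesis unfolding c(2) by (intro H_sum H_mult H_pow fH BH c(1)[rule_format]) simp
  qed
  then show ?thesis by (rule arch)
qed

end
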